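(* Let $M$ and $M'$ be two stable matchings in an instance $I$ of SPA-S, and let $M^\land$ be the assignment defined from $M,M'$ in the context. Then $M^\land$ is a matching.
   Context: An instance $I$ of SPA-S consists of a finite set $\mathcal{S}$ of students, a finite set $\mathcal{P}$ of projects and a finite set $\mathcal{L}$ of lecturers. Each student $s_i$ ranks a subset $A_i\subseteq\mathcal{P}$ (its acceptable projects) in strict order. Each project is offered by exactly one lecturer; lecturer $l_k$ offers a nonempty set $P_k\subseteq\mathcal{P}$, the $P_k$ partitioning $\mathcal{P}$. Each lecturer $l_k$ ranks in strict order the students who find at least one project of $P_k$ acceptable. Projects have capacities $c_j\in\mathbb{Z}^+$, lecturers have capacities $d_k\in\mathbb{Z}^+$ with $\max\{c_j:p_j\in P_k\}\le d_k\le\sum\{c_j:p_j\in P_k\}$. A pair $(s_i,p_j)$, $p_j$ offered by $l_k$, is acceptable if $p_j\in A_i$ and $s_i$ is on $l_k$'s list. A matching $M$ is a set of acceptable pairs with each student in at most one pair, $|M(p_j)|\le c_j$, $|M(l_k)|\le d_k$, where for an assignment $M$ (a set of acceptable pairs), $M(s_i)$, $M(p_j)$, $M(l_k)$ denote the project of $s_i$, the students assigned to $p_j$, and the students assigned to projects of $l_k$. Undersubscribed/full means fewer than/exactly capacity many assigned students. An acceptable pair $(s_i,p_j)\notin M$ ($p_j$ offered by $l_k$) blocks $M$ if ($s_i$ is unassigned or prefers $p_j$ to $M(s_i)$) and one of: (P1) $p_j$ and $l_k$ undersubscribed; (P2) $p_j$ undersubscribed, $l_k$ full, $s_i\in M(l_k)$;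 (P3) $p_j$ undersubscribed, $l_k$ full, $l_k$ prefers $s_i$ to the worst student of $M(l_k)$; (P4) $p_j$ full and $l_k$ prefers $s_i$ to the worst student of $M(p_j)$. $M$ is stable if it has no blocking pair. Given stable matchings $M,M'$, $M^\land$ is the assignment in which each student unassigned in both $M$ and $M'$ is unassigned, each student assigned to the same project in both is assigned to that project, and every other student is assigned to the better (in her preference) of her projects in $M$ and $M'$. *)

theory Defs
  imports Main
begin

text \<open>Students have type 's, projects 'p, lecturers 'l.
  stu_pref I s p q  means: student s prefers project p to project q (strict).
  lec_pref I l s t  means: lecturer l prefers student s to student t (strict).\<close>

record ('s, 'p, 'l) spa =
  students :: "'s set"
  projects :: "'p set"
  lecturers :: "'l set"
  acc :: "'s \<Rightarrow> 'p set"
  stu_pref :: "'s \<Rightarrow> 'p \<Rightarrow> 'p \<Rightarrow> bool"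
  offerer :: "'p \<Rightarrow> 'l"
  lec_pref :: "'l \<Rightarrow> 's \<Rightarrow> 's \<Rightarrow> bool"
  pcap :: "'p \<Rightarrow> nat"
  lcap :: "'l \<Rightarrow> nat"

definition strict_total_on :: "'a set \<Rightarrow> ('a \<Rightarrow> 'a \<Rightarrow> bool) \<Rightarrow> bool" where
  "strict_total_on X R \<longleftrightarrow>
     (\<forall>x y. R x y \<longrightarrow> x \<in> X \<and> y \<in> X) \<and>
     (\<forall>x\<in>X. \<not> R x x) \<and>
     (\<forall>x\<in>X. \<forall>y\<in>X. \<forall>z\<in>X. R x y \<longrightarrow> R y z \<longrightarrow> R x z) \<and>
     (\<forall>x\<in>X. \<forall>y\<in>X. x \<noteq> y \<longrightarrow> R x y \<or> R y x)"

definition offered :: "('s, 'p, 'l) spa \<Rightarrow> 'l \<Rightarrow> 'p set" where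
  "offered I l = {p \<in> projects I. offerer I p = l}"

definition lec_list :: "('s, 'p, 'l) spa \<Rightarrow> 'l \<Rightarrow> 's set" where
  "lec_list I l = {s \<in> students I. \<exists>p \<in> acc I s. offerer I p = l}"

definition spa_instance :: "('s, 'p, 'l) spa \<Rightarrow> bool" where
  "spa_instance I \<longleftrightarrow>
     finite (students I) \<and> finite (projects I) \<and> finite (lecturers I) \<and>
     (\<forall>s \<in> students I. acc I s \<subseteq> projects I \<and> strict_total_on (acc I s) (stu_pref I s)) \<and>
     (\<forall>p \<in> projects I. offerer I p \<in> lecturers I \<and> pcap I p > 0) \<and>
     (\<forall>l \<in> lecturers I. offered I l \<noteq> {} \<and>
        strict_total_on (lec_list I l) (lec_pref I l) \<and>
        Max (pcap I ` offered I l) \<le> lcap I l \<and>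
        lcap I l \<le> (\<Sum>p \<in> offered I l. pcap I p))"

definition acceptable_pair :: "('s, 'p, 'l) spa \<Rightarrow> 's \<Rightarrow> 'p \<Rightarrow> bool" where
  "acceptable_pair I s p \<longleftrightarrow> s \<in> students I \<and> p \<in> projects I \<and> p \<in> acc I s
      \<and> s \<in> lec_list I (offerer I p)"

definition assigned :: "('s \<times> 'p) set \<Rightarrow> 's \<Rightarrow> bool" where
  "assigned M s \<longleftrightarrow> (\<exists>p. (s, p) \<in> M)"

definition proj_of :: "('s \<times> 'p) set \<Rightarrow> 's \<Rightarrow> 'p" where
  "proj_of M s = (THE p. (s, p) \<in> M)"

definition studs_of_proj :: "('s \<times> 'p) set \<Rightarrow> 'p \<Rightarrow> 's set" where
  "studs_of_proj M p = {s. (s, p) \<in> M}"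

definition studs_of_lec :: "('s, 'p, 'l) spa \<Rightarrow> ('s \<times> 'p) set \<Rightarrow> 'l \<Rightarrow> 's set" where
  "studs_of_lec I M l = {s. \<exists>p. (s, p) \<in> M \<and> offerer I p = l}"

definition is_matching :: "('s, 'p, 'l) spa \<Rightarrow> ('s \<times> 'p) set \<Rightarrow> bool" where
  "is_matching I M \<longleftrightarrow>
     (\<forall>(s, p) \<in> M. acceptable_pair I s p) \<and>
     (\<forall>s p q. (s, p) \<in> M \<longrightarrow> (s, q) \<in> M \<longrightarrow> p = q) \<and>
     (\<forall>p \<in> projects I. card (studs_of_proj M p) \<le> pcap I p) \<and>
     (\<forall>l \<in> lecturers I. card (studs_of_lec I M l) \<le> lcap I l)"

definition proj_under :: "('s, 'p, 'l) spa \<Rightarrow> ('s \<times> 'p) set \<Rightarrow> 'p \<Rightarrow> bool" where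
  "proj_under I M p \<longleftrightarrow> card (studs_of_proj M p) < pcap I p"

definition proj_full :: "('s, 'p, 'l) spa \<Rightarrow> ('s \<times> 'p) set \<Rightarrow> 'p \<Rightarrow> bool" where
  "proj_full I M p \<longleftrightarrow> card (studs_of_proj M p) = pcap I p"

definition lec_under :: "('s, 'p, 'l) spa \<Rightarrow> ('s \<times> 'p) set \<Rightarrow> 'l \<Rightarrow> bool" where
  "lec_under I M l \<longleftrightarrow> card (studs_of_lec I M l) < lcap I l"

definition lec_full :: "('s, 'p, 'l) spa \<Rightarrow> ('s \<times> 'p) set \<Rightarrow> 'l \<Rightarrow> bool" where
  "lec_full I M l \<longleftrightarrow> card (studs_of_lec I M l) = lcap I l"

definition worst :: "('s, 'p, 'l) spa \<Rightarrow> 'l \<Rightarrow> 's set \<Rightarrow> 's" where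
  "worst I l X = (THE w. w \<in> X \<and> (\<forall>x \<in> X. x \<noteq> w \<longrightarrow> lec_pref I l x w))"

definition blocking_pair :: "('s, 'p, 'l) spa \<Rightarrow> ('s \<times> 'p) set \<Rightarrow> 's \<Rightarrow> 'p \<Rightarrow> bool" where
  "blocking_pair I M s p \<longleftrightarrow>
     (let l = offerer I p in
      acceptable_pair I s p \<and> (s, p) \<notin> M \<and>
      (\<not> assigned M s \<or> stu_pref I s p (proj_of M s)) \<and>
      ((proj_under I M p \<and> lec_under I M l) \<or>
       (proj_under I M p \<and> lec_full I M l \<and> s \<in> studs_of_lec I M l) \<or>
       (proj_under I M p \<and> lec_full I M l \<and>
          lec_pref I l s (worst I l (studs_of_lec I M l))) \<or>
       (proj_full I M p \<and> lec_pref I l s (worst I l (studs_of_proj M p)))))"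

definition stable :: "('s, 'p, 'l) spa \<Rightarrow> ('s \<times> 'p) set \<Rightarrow> bool" where
  "stable I M \<longleftrightarrow> is_matching I M \<and> (\<forall>s p. \<not> blocking_pair I M s p)"

text \<open>M-wedge: each student gets the better (for her) of her projects in M and M'
  (the common one if equal; none if unassigned in both; the only one if assigned in just one).\<close>
definition meet :: "('s, 'p, 'l) spa \<Rightarrow> ('s \<times> 'p) set \<Rightarrow> ('s \<times> 'p) set \<Rightarrow> ('s \<times> 'p) set" where
  "meet I M M' = {(s, p). (s, p) \<in> M \<union> M' \<and>
                   (\<forall>q. (s, q) \<in> M \<union> M' \<longrightarrow> q = p \<or> stu_pref I s p q)}"

end

theory Submission
  imports Defs
begin


definition prefers :: "('s, 'p, 'l) spa \<Rightarrow> ('s \<times> 'p) set \<Rightarrow> ('s \<times> 'p) set \<Rightarrow> 's \<Rightarrow> bool" where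
  "prefers I M N s \<longleftrightarrow> assigned N s \<and> (\<not> assigned M s \<or> stu_pref I s (proj_of N s) (proj_of M s))"

definition common :: "('s, 'p, 'l) spa \<Rightarrow> ('s \<times> 'p) set \<Rightarrow> ('s \<times> 'p) set \<Rightarrow> 'l \<Rightarrow> 's set" where
  "common I M N l = {s. \<exists>p. offerer I p = l \<and> (s, p) \<in> M \<and> (s, p) \<in> N}"

lemma common_sym: "common I M N l = common I N M l"
  unfolding common_def by auto

lemma sto_dom: "strict_total_on X R \<Longrightarrow> R x y \<Longrightarrow> x \<in> X \<and> y \<in> X"
  unfolding strict_total_on_def by blast
lemma sto_irr: "strict_total_on X R \<Longrightarrow> \<not> R x x"
  unfolding strict_total_on_def by blast
lemma sto_trans: "strict_total_on X R \<Longrightarrow> R x y \<Longrightarrow> R y z \<Longrightarrow> R x z"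
  unfolding strict_total_on_def by blast
lemma sto_asym: "strict_total_on X R \<Longrightarrow> R x y \<Longrightarrow> \<not> R y x"
  using sto_irr sto_trans by metis
lemma sto_total: "strict_total_on X R \<Longrightarrow> x \<in> X \<Longrightarrow> y \<in> X \<Longrightarrow> x \<noteq> y \<Longrightarrow> R x y \<or> R y x"
  unfolding strict_total_on_def by blast

lemma sto_min_exists:
  assumes "strict_total_on X R" "finite Y" "Y \<noteq> {}" "Y \<subseteq> X"
  shows "\<exists>w\<in>Y. \<forall>x\<in>Y. x \<noteq> w \<longrightarrow> R x w"
  using assms(2,3,4)
proof (induction Y rule: finite_ne_induct)
  case (singleton x) then show ?case by auto
next
  case (insert x F)
  then obtain w where w: "w \<in> F" "\<forall>y\<in>F. y \<noteq> w \<longrightarrow> R y w" by auto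
  have "x \<noteq> w" using w insert by auto
  moreover have "x \<in> X" "w \<in> X" using insert w by auto
  ultimately have "R x w \<or> R w x" using sto_total[OF assms(1), of x w] by blast
  then show ?case
  proof
    assume "R x w" then show ?thesis using w by auto
  next
    assume "R w x" then show ?thesis using w sto_trans[OF assms(1)] insert
      by (metis insert_iff)
  qed
qed

lemma worst_prop:
  assumes "strict_total_on (lec_list I l) (lec_pref I l)" "finite Y" "Y \<noteq> {}" "Y \<subseteq> lec_list I l"
  shows "worst I l Y \<in> Y \<and> (\<forall>x\<in>Y. x \<noteq> worst I l Y \<longrightarrow> lec_pref I l x (worst I l Y))"
proof -
  obtain w where w: "w \<in> Y" "\<forall>x\<in>Y. x \<noteq> w \<longrightarrow> lec_pref I l x w"
    using sto_min_exists[OF assms] by blast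
  have "worst I l Y = w" unfolding worst_def
  proof (rule the_equality)
    show "w \<in> Y \<and> (\<forall>x\<in>Y. x \<noteq> w \<longrightarrow> lec_pref I l x w)" using w by blast
  next
    fix w' assume h: "w' \<in> Y \<and> (\<forall>x\<in>Y. x \<noteq> w' \<longrightarrow> lec_pref I l x w')"
    show "w' = w"
    proof (rule ccontr)
      assume "w' \<noteq> w"
      then have "lec_pref I l w' w" "lec_pref I l w w'" using w h by auto
      then show False using sto_asym[OF assms(1)] by blast
    qed
  qed
  then show ?thesis using w by simp
qed

lemma below_worst:
  assumes "strict_total_on (lec_list I l) (lec_pref I l)" "finite Y" "Y \<noteq> {}" "Y \<subseteq> lec_list I l"
    "t \<in> lec_list I l" "t \<notin> Y" "\<not> lec_pref I l t (worst I l Y)"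
  shows "\<forall>u\<in>Y. lec_pref I l u t"
proof
  fix u assume u: "u \<in> Y"
  let ?w = "worst I l Y"
  have w: "?w \<in> Y" "\<forall>x\<in>Y. x \<noteq> ?w \<longrightarrow> lec_pref I l x ?w" using worst_prop[OF assms(1-4)] by auto
  have "t \<noteq> ?w" using w assms by auto
  then have wt: "lec_pref I l ?w t" using sto_total[OF assms(1)] assms w by blast
  show "lec_pref I l u t"
  proof (cases "u = ?w")
    case True then show ?thesis using wt by simp
  next
    case False then show ?thesis using w u wt sto_trans[OF assms(1)] by blast
  qed
qed

lemma above_worst:
  assumes "strict_total_on (lec_list I l) (lec_pref I l)" "finite Y" "Y \<subseteq> lec_list I l"
    "t \<in> Y" "lec_pref I l u t"
  shows "lec_pref I l u (worst I l Y)"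
proof -
  let ?w = "worst I l Y"
  have w: "?w \<in> Y" "\<forall>x\<in>Y. x \<noteq> ?w \<longrightarrow> lec_pref I l x ?w" using worst_prop[OF assms(1-2) _ assms(3)] assms(4) by auto
  show ?thesis
  proof (cases "t = ?w")
    case True then show ?thesis using assms by simp
  next
    case False then show ?thesis using w assms sto_trans[OF assms(1)] by blast
  qed
qed

lemma inst_stu: "spa_instance I \<Longrightarrow> s \<in> students I \<Longrightarrow> strict_total_on (acc I s) (stu_pref I s)"
  unfolding spa_instance_def by blast
lemma inst_lec: "spa_instance I \<Longrightarrow> l \<in> lecturers I \<Longrightarrow> strict_total_on (lec_list I l) (lec_pref I l)"
  unfolding spa_instance_def by blast
lemma inst_off: "spa_instance I \<Longrightarrow> p \<in> projects I \<Longrightarrow> offerer I p \<in> lecturers I"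
  unfolding spa_instance_def by blast
lemma inst_pcap: "spa_instance I \<Longrightarrow> p \<in> projects I \<Longrightarrow> pcap I p > 0"
  unfolding spa_instance_def by blast
lemma inst_lmax: "spa_instance I \<Longrightarrow> l \<in> lecturers I \<Longrightarrow> Max (pcap I ` offered I l) \<le> lcap I l"
  unfolding spa_instance_def by (elim conjE) (drule (1) bspec, elim conjE, assumption)
lemma inst_finp: "spa_instance I \<Longrightarrow> finite (projects I)"
  unfolding spa_instance_def by (elim conjE)
lemma inst_fins: "spa_instance I \<Longrightarrow> finite (students I)"
  unfolding spa_instance_def by (elim conjE)
lemma inst_lcap: 
  assumes "spa_instance I" "p \<in> projects I"
  shows "pcap I p \<le> lcap I (offerer I p)"
proof -
  have l: "offerer I p \<in> lecturers I" using inst_off[OF assms] .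
  have sub: "offered I (offerer I p) \<subseteq> projects I" unfolding offered_def by blast
  have fin: "finite (offered I (offerer I p))" using finite_subset[OF sub inst_finp[OF assms(1)]] .
  have mem: "p \<in> offered I (offerer I p)" using assms(2) unfolding offered_def by blast
  have "pcap I p \<le> Max (pcap I ` offered I (offerer I p))"
    using Max_ge[OF finite_imageI[OF fin] imageI[OF mem]] .
  also have "\<dots> \<le> lcap I (offerer I p)" using inst_lmax[OF assms(1) l] .
  finally show ?thesis .
qed

lemma m_acc: "is_matching I M \<Longrightarrow> (s, p) \<in> M \<Longrightarrow> acceptable_pair I s p"
  unfolding is_matching_def by blast
lemma m_fun: "is_matching I M \<Longrightarrow> (s, p) \<in> M \<Longrightarrow> (s, q) \<in> M \<Longrightarrow> p = q"
  unfolding is_matching_def by blast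
lemma m_proj: "is_matching I M \<Longrightarrow> (s, p) \<in> M \<Longrightarrow> proj_of M s = p"
  unfolding proj_of_def using m_fun by (metis the_equality)
lemma m_assigned: "is_matching I M \<Longrightarrow> assigned M s \<Longrightarrow> (s, proj_of M s) \<in> M"
  unfolding assigned_def using m_proj by metis
lemma m_pcap: "is_matching I M \<Longrightarrow> p \<in> projects I \<Longrightarrow> card (studs_of_proj M p) \<le> pcap I p"
  unfolding is_matching_def by blast
lemma m_lcap: "is_matching I M \<Longrightarrow> l \<in> lecturers I \<Longrightarrow> card (studs_of_lec I M l) \<le> lcap I l"
  unfolding is_matching_def by blast

lemma fin_proj: "spa_instance I \<Longrightarrow> is_matching I M \<Longrightarrow> finite (studs_of_proj M p)"
  by (rule finite_subset[of _ "students I"]) 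
     (auto simp: studs_of_proj_def inst_fins dest: m_acc simp: acceptable_pair_def)
lemma fin_lec: "spa_instance I \<Longrightarrow> is_matching I M \<Longrightarrow> finite (studs_of_lec I M l)"
  by (rule finite_subset[of _ "students I"]) 
     (auto simp: studs_of_lec_def inst_fins dest: m_acc simp: acceptable_pair_def)
lemma proj_sub: "is_matching I M \<Longrightarrow> studs_of_proj M p \<subseteq> lec_list I (offerer I p)"
  by (auto simp: studs_of_proj_def dest: m_acc simp: acceptable_pair_def)
lemma lec_sub: "is_matching I M \<Longrightarrow> studs_of_lec I M l \<subseteq> lec_list I l"
  by (auto simp: studs_of_lec_def dest: m_acc simp: acceptable_pair_def)

lemma prefers_notin:
  assumes "spa_instance I" "is_matching I M" "is_matching I N" "(t, q) \<in> N" "prefers I M N t"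
  shows "(t, q) \<notin> M"
proof
  assume "(t, q) \<in> M"
  then have 1: "proj_of M t = q" "assigned M t" using m_proj[OF assms(2)] unfolding assigned_def by blast+
  have 2: "proj_of N t = q" using m_proj[OF assms(3,4)] .
  have "stu_pref I t q q" using assms(5) 1 2 unfolding prefers_def by simp
  moreover have "t \<in> students I" using m_acc[OF assms(3,4)] unfolding acceptable_pair_def by blast
  ultimately show False using sto_irr[OF inst_stu[OF assms(1)]] by blast
qed



lemma proj_in_lec: "studs_of_proj M q \<subseteq> studs_of_lec I M (offerer I q)"
  unfolding studs_of_proj_def studs_of_lec_def by blast

lemma nonblock:
  assumes inst: "spa_instance I" and sM: "stable I M" and mN: "is_matching I N"
    and tq: "(t, q) \<in> N" and pr: "prefers I M N t"
  shows "(proj_full I M q \<and> (\<forall>u\<in>studs_of_proj M q. lec_pref I (offerer I q) u t)) \<or>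
         (proj_under I M q \<and> lec_full I M (offerer I q) \<and> t \<notin> studs_of_lec I M (offerer I q) \<and>
            (\<forall>u\<in>studs_of_lec I M (offerer I q). lec_pref I (offerer I q) u t))"
proof -
  define l where "l = offerer I q"
  have mM: "is_matching I M" using sM unfolding stable_def by blast
  have acc: "acceptable_pair I t q" using m_acc[OF mN tq] .
  have q: "q \<in> projects I" and tl: "t \<in> lec_list I l" using acc unfolding acceptable_pair_def l_def by auto
  have l: "l \<in> lecturers I" using inst_off[OF inst q] l_def by simp
  have sto: "strict_total_on (lec_list I l) (lec_pref I l)" using inst_lec[OF inst l] .
  have notM: "(t, q) \<notin> M" using prefers_notin[OF inst mM mN tq pr] .
  have pq: "proj_of N t = q" using m_proj[OF mN tq] .
  have sc: "\<not> assigned M t \<or> stu_pref I t q (proj_of M t)" using pr pq unfolding prefers_def by simp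
  have nb: "\<not> blocking_pair I M t q" using sM unfolding stable_def by blast
  then have nb': "\<not> ((proj_under I M q \<and> lec_under I M l) \<or>
       (proj_under I M q \<and> lec_full I M l \<and> t \<in> studs_of_lec I M l) \<or>
       (proj_under I M q \<and> lec_full I M l \<and> lec_pref I l t (worst I l (studs_of_lec I M l))) \<or>
       (proj_full I M q \<and> lec_pref I l t (worst I l (studs_of_proj M q))))"
    using acc notM sc unfolding blocking_pair_def Let_def l_def by blast
  have finq: "finite (studs_of_proj M q)" using fin_proj[OF inst mM] .
  have finl: "finite (studs_of_lec I M l)" using fin_lec[OF inst mM] .
  have subq: "studs_of_proj M q \<subseteq> lec_list I l" using proj_sub[OF mM] l_def by simp
  have subl: "studs_of_lec I M l \<subseteq> lec_list I l" using lec_sub[OF mM] .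
  have pc: "card (studs_of_proj M q) \<le> pcap I q" using m_pcap[OF mM q] .
  have lc: "card (studs_of_lec I M l) \<le> lcap I l" using m_lcap[OF mM l] .
  have pq0: "pcap I q > 0" using inst_pcap[OF inst q] .
  have lq: "pcap I q \<le> lcap I l" using inst_lcap[OF inst q] l_def by simp
  have tq': "t \<notin> studs_of_proj M q" using notM unfolding studs_of_proj_def by simp
  show ?thesis
  proof (cases "card (studs_of_proj M q) = pcap I q")
    case True
    then have full: "proj_full I M q" unfolding proj_full_def .
    have ne: "studs_of_proj M q \<noteq> {}" using True pq0 by auto
    have "\<not> lec_pref I l t (worst I l (studs_of_proj M q))" using nb' full by blast
    then have "\<forall>u\<in>studs_of_proj M q. lec_pref I l u t" using below_worst[OF sto finq ne subq tl tq'] by blast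
    then show ?thesis using full l_def by blast
  next
    case False
    then have under: "proj_under I M q" using pc unfolding proj_under_def by simp
    then have "\<not> lec_under I M l" using nb' by blast
    then have lfull: "lec_full I M l" using lc unfolding lec_under_def lec_full_def by simp
    then have tn: "t \<notin> studs_of_lec I M l" using nb' under by blast
    have ne: "studs_of_lec I M l \<noteq> {}" using lfull pq0 lq unfolding lec_full_def by auto
    have "\<not> lec_pref I l t (worst I l (studs_of_lec I M l))" using nb' under lfull by blast
    then have "\<forall>u\<in>studs_of_lec I M l. lec_pref I l u t" using below_worst[OF sto finl ne subl tl tn] by blast
    then show ?thesis using under lfull tn l_def by blast
  qed
qed

lemma nonblock_proj:
  assumes inst: "spa_instance I" and sM: "stable I M" and mN: "is_matching I N"
    and tq: "(t, q) \<in> N" and pr: "prefers I M N t"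
  shows "\<forall>u\<in>studs_of_proj M q. lec_pref I (offerer I q) u t"
  using nonblock[OF assms] proj_in_lec[of M q I] by blast



lemma proj_count:
  assumes inst: "spa_instance I" and sM: "stable I M" and sN: "stable I N"
    and q: "q \<in> projects I" and full: "proj_full I M q" and tq: "(t, q) \<in> N"
    and better: "\<forall>u\<in>studs_of_proj M q. lec_pref I (offerer I q) u t"
  shows "card {s\<in>studs_of_proj N q. prefers I M N s} \<le> card {s\<in>studs_of_proj M q. prefers I M N s}"
proof -
  define l where "l = offerer I q"
  have mM: "is_matching I M" using sM unfolding stable_def by blast
  have mN: "is_matching I N" using sN unfolding stable_def by blast
  have l: "l \<in> lecturers I" using inst_off[OF inst q] l_def by simp
  have sto: "strict_total_on (lec_list I l) (lec_pref I l)" using inst_lec[OF inst l] .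
  have finM: "finite (studs_of_proj M q)" using fin_proj[OF inst mM] .
  have finN: "finite (studs_of_proj N q)" using fin_proj[OF inst mN] .
  have sub1: "{s\<in>studs_of_proj N q. prefers I M N s} \<subseteq> studs_of_proj N q - studs_of_proj M q"
    using prefers_notin[OF inst mM mN] unfolding studs_of_proj_def by blast
  have sub2: "studs_of_proj M q - studs_of_proj N q \<subseteq> {s\<in>studs_of_proj M q. prefers I M N s}"
  proof
    fix u assume u: "u \<in> studs_of_proj M q - studs_of_proj N q"
    then have uM: "(u, q) \<in> M" and uN: "(u, q) \<notin> N" unfolding studs_of_proj_def by auto
    show "u \<in> {s\<in>studs_of_proj M q. prefers I M N s}"
    proof (rule ccontr)
      assume "u \<notin> {s\<in>studs_of_proj M q. prefers I M N s}"
      then have np: "\<not> prefers I M N u" using u by blast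
      have acc: "acceptable_pair I u q" using m_acc[OF mM uM] .
      have us: "u \<in> students I" and qa: "q \<in> acc I u" using acc unfolding acceptable_pair_def by auto
      have pM: "proj_of M u = q" using m_proj[OF mM uM] .
      have aM: "assigned M u" using uM unfolding assigned_def by blast
      have sc: "\<not> assigned N u \<or> stu_pref I u q (proj_of N u)"
      proof (cases "assigned N u")
        case True
        let ?r = "proj_of N u"
        have rN: "(u, ?r) \<in> N" using m_assigned[OF mN True] .
        have rq: "?r \<noteq> q" using rN uN by auto
        have ra: "?r \<in> acc I u" using m_acc[OF mN rN] unfolding acceptable_pair_def by blast
        have "\<not> stu_pref I u ?r q" using np True aM pM unfolding prefers_def by simp
        then have "stu_pref I u q ?r" using sto_total[OF inst_stu[OF inst us] qa ra] rq by blast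
        then show ?thesis by simp
      next
        case False then show ?thesis by simp
      qed
      have ut: "lec_pref I l u t" using better uM unfolding studs_of_proj_def l_def by blast
      have tNq: "t \<in> studs_of_proj N q" using tq unfolding studs_of_proj_def by simp
      have tNl: "t \<in> studs_of_lec I N l" using tq unfolding studs_of_lec_def l_def by blast
      have cond: "(proj_under I N q \<and> lec_under I N l) \<or>
       (proj_under I N q \<and> lec_full I N l \<and> u \<in> studs_of_lec I N l) \<or>
       (proj_under I N q \<and> lec_full I N l \<and> lec_pref I l u (worst I l (studs_of_lec I N l))) \<or>
       (proj_full I N q \<and> lec_pref I l u (worst I l (studs_of_proj N q)))"
      proof (cases "card (studs_of_proj N q) = pcap I q")
        case True
        then have "proj_full I N q" unfolding proj_full_def .
        moreover have "lec_pref I l u (worst I l (studs_of_proj N q))"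
          using above_worst[OF sto finN _ tNq ut] proj_sub[OF mN, of q] l_def by blast
        ultimately show ?thesis by blast
      next
        case False
        then have under: "proj_under I N q" using m_pcap[OF mN q] unfolding proj_under_def by simp
        show ?thesis
        proof (cases "card (studs_of_lec I N l) < lcap I l")
          case True then show ?thesis using under unfolding lec_under_def by blast
        next
          case False
          then have lf: "lec_full I N l" using m_lcap[OF mN l] unfolding lec_full_def by simp
          have "lec_pref I l u (worst I l (studs_of_lec I N l))"
            using above_worst[OF sto fin_lec[OF inst mN] lec_sub[OF mN] tNl ut] .
          then show ?thesis using under lf by blast
        qed
      qed
      have "blocking_pair I N u q" using acc uN sc cond unfolding blocking_pair_def Let_def l_def by blast
      then show False using sN unfolding stable_def by blast
    qed
  qed
  let ?M = "studs_of_proj M q" and ?N = "studs_of_proj N q"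
  have e1: "card (?N - ?M) = card ?N - card (?N \<inter> ?M)" by (rule card_Diff_subset_Int) (simp add: finN)
  have e2: "card (?M - ?N) = card ?M - card (?M \<inter> ?N)" by (rule card_Diff_subset_Int) (simp add: finM)
  have e3: "?N \<inter> ?M = ?M \<inter> ?N" by blast
  have "card ?N \<le> card ?M" using m_pcap[OF mN q] full unfolding proj_full_def by simp
  then have "card (?N - ?M) \<le> card (?M - ?N)" using e1 e2 e3 by simp
  moreover have "card {s\<in>?N. prefers I M N s} \<le> card (?N - ?M)"
    using card_mono[OF _ sub1] finN by blast
  moreover have "card (?M - ?N) \<le> card {s\<in>?M. prefers I M N s}"
    using card_mono[OF _ sub2] finM by simp
  ultimately show ?thesis by linarith
qed

lemma pr_split:
  assumes inst: "spa_instance I" and mM: "is_matching I M" and mN: "is_matching I N" and sp: "(s, p) \<in> M"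
  shows "(s, p) \<in> N \<Longrightarrow> \<not> prefers I N M s \<and> \<not> prefers I M N s"
    and "(s, p) \<notin> N \<Longrightarrow> prefers I N M s \<longleftrightarrow> \<not> prefers I M N s"
proof -
  have pM: "proj_of M s = p" using m_proj[OF mM sp] .
  have aM: "assigned M s" using sp unfolding assigned_def by blast
  have us: "s \<in> students I" and pa: "p \<in> acc I s" using m_acc[OF mM sp] unfolding acceptable_pair_def by auto
  have sto: "strict_total_on (acc I s) (stu_pref I s)" using inst_stu[OF inst us] .
  show "\<not> prefers I N M s \<and> \<not> prefers I M N s" if spN: "(s, p) \<in> N"
  proof -
    have pN: "proj_of N s = p" using m_proj[OF mN spN] .
    have aN: "assigned N s" using spN unfolding assigned_def by blast
    show ?thesis unfolding prefers_def using pM pN aM aN sto_irr[OF sto] by simp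
  qed
  show "prefers I N M s \<longleftrightarrow> \<not> prefers I M N s" if spN: "(s, p) \<notin> N"
  proof (cases "assigned N s")
    case True
    let ?r = "proj_of N s"
    have rN: "(s, ?r) \<in> N" using m_assigned[OF mN True] .
    have rp: "?r \<noteq> p" using rN spN by auto
    have ra: "?r \<in> acc I s" using m_acc[OF mN rN] unfolding acceptable_pair_def by blast
    have "stu_pref I s p ?r \<or> stu_pref I s ?r p" using sto_total[OF sto pa ra] rp by blast
    moreover have "\<not> (stu_pref I s p ?r \<and> stu_pref I s ?r p)" using sto_asym[OF sto] by blast
    ultimately show ?thesis unfolding prefers_def using pM aM True by auto
  next
    case False
    then show ?thesis unfolding prefers_def using aM by simp
  qed
qed

lemma lec_decomp:
  assumes inst: "spa_instance I" and mM: "is_matching I M" and mN: "is_matching I N"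
  shows "card (studs_of_lec I M l) = card (common I M N l) + card {s\<in>studs_of_lec I M l. prefers I N M s}
           + card {s\<in>studs_of_lec I M l. prefers I M N s}"
proof -
  let ?L = "studs_of_lec I M l" and ?C = "common I M N l"
  let ?A = "{s\<in>?L. prefers I N M s}" and ?B = "{s\<in>?L. prefers I M N s}"
  have finL: "finite ?L" using fin_lec[OF inst mM] .
  have Csub: "?C \<subseteq> ?L" unfolding common_def studs_of_lec_def by blast
  have finC: "finite ?C" using finite_subset[OF Csub finL] .
  have finA: "finite ?A" using finL by simp
  have finB: "finite ?B" using finL by simp
  have eq: "?L = ?C \<union> ?A \<union> ?B"
  proof
    show "?L \<subseteq> ?C \<union> ?A \<union> ?B"
    proof
      fix s assume s: "s \<in> ?L"
      then obtain p where sp: "(s, p) \<in> M" and pl: "offerer I p = l" unfolding studs_of_lec_def by blast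
      show "s \<in> ?C \<union> ?A \<union> ?B"
      proof (cases "(s, p) \<in> N")
        case True then have "s \<in> ?C" using sp pl unfolding common_def by blast
        then show ?thesis by blast
      next
        case False then show ?thesis using pr_split(2)[OF inst mM mN sp] s by blast
      qed
    qed
  next
    show "?C \<union> ?A \<union> ?B \<subseteq> ?L" using Csub by blast
  qed
  have dC: "?C \<inter> (?A \<union> ?B) = {}"
  proof -
    { fix s assume "s \<in> ?C"
      then obtain p where sp: "(s, p) \<in> M" "(s, p) \<in> N" unfolding common_def by blast
      then have "\<not> prefers I N M s \<and> \<not> prefers I M N s" using pr_split(1)[OF inst mM mN] by blast }
    then show ?thesis by blast
  qed
  have dAB: "?A \<inter> ?B = {}"
  proof -
    { fix s assume s: "s \<in> ?L" and a: "prefers I N M s" and b: "prefers I M N s"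
      then obtain p where sp: "(s, p) \<in> M" unfolding studs_of_lec_def by blast
      have False
      proof (cases "(s, p) \<in> N")
        case True then show False using pr_split(1)[OF inst mM mN sp] a by blast
      next
        case False then show False using pr_split(2)[OF inst mM mN sp] a b by blast
      qed }
    then show ?thesis by blast
  qed
  have "card ?L = card (?C \<union> (?A \<union> ?B))" using eq by (simp add: Un_assoc)
  also have "\<dots> = card ?C + card (?A \<union> ?B)" using card_Un_disjoint[OF finC _ dC] finA finB by simp
  also have "card (?A \<union> ?B) = card ?A + card ?B" using card_Un_disjoint[OF finA finB dAB] .
  finally show ?thesis by simp
qed

lemma lec_sum:
  assumes inst: "spa_instance I" and mK: "is_matching I K"
  shows "card {s\<in>studs_of_lec I K l. P s} = (\<Sum>q\<in>offered I l. card {s\<in>studs_of_proj K q. P s})"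
proof -
  have eq: "{s\<in>studs_of_lec I K l. P s} = (\<Union>q\<in>offered I l. {s\<in>studs_of_proj K q. P s})"
  proof
    show "{s\<in>studs_of_lec I K l. P s} \<subseteq> (\<Union>q\<in>offered I l. {s\<in>studs_of_proj K q. P s})"
    proof
      fix s assume s: "s \<in> {s\<in>studs_of_lec I K l. P s}"
      then obtain p where sp: "(s, p) \<in> K" and pl: "offerer I p = l" unfolding studs_of_lec_def by blast
      have "p \<in> projects I" using m_acc[OF mK sp] unfolding acceptable_pair_def by blast
      then have "p \<in> offered I l" using pl unfolding offered_def by blast
      then show "s \<in> (\<Union>q\<in>offered I l. {s\<in>studs_of_proj K q. P s})"
        using sp s unfolding studs_of_proj_def by blast
    qed
  next
    show "(\<Union>q\<in>offered I l. {s\<in>studs_of_proj K q. P s}) \<subseteq> {s\<in>studs_of_lec I K l. P s}"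
      unfolding offered_def studs_of_proj_def studs_of_lec_def by blast
  qed
  have fin: "finite (offered I l)" using inst_finp[OF inst] unfolding offered_def by simp
  have finq: "\<forall>q\<in>offered I l. finite {s\<in>studs_of_proj K q. P s}" using fin_proj[OF inst mK] by simp
  have dis: "\<forall>i\<in>offered I l. \<forall>j\<in>offered I l. i \<noteq> j \<longrightarrow>
      {s\<in>studs_of_proj K i. P s} \<inter> {s\<in>studs_of_proj K j. P s} = {}"
    using m_fun[OF mK] unfolding studs_of_proj_def by blast
  show ?thesis unfolding eq using card_UN_disjoint[OF fin finq dis] .
qed



lemma lec_count:
  assumes inst: "spa_instance I" and sM: "stable I M" and sN: "stable I N" and l: "l \<in> lecturers I"
  shows "card {s\<in>studs_of_lec I N l. prefers I M N s} \<le> card {s\<in>studs_of_lec I M l. prefers I M N s}"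
proof -
  have mM: "is_matching I M" using sM unfolding stable_def by blast
  have mN: "is_matching I N" using sN unfolding stable_def by blast
  have sto: "strict_total_on (lec_list I l) (lec_pref I l)" using inst_lec[OF inst l] .
  show ?thesis
  proof (cases "\<exists>q\<in>offered I l. \<exists>t. (t, q) \<in> N \<and> prefers I M N t \<and> proj_under I M q")
    case False
    have "\<forall>q\<in>offered I l. card {s\<in>studs_of_proj N q. prefers I M N s} \<le> card {s\<in>studs_of_proj M q. prefers I M N s}"
    proof
      fix q assume qo: "q \<in> offered I l"
      then have q: "q \<in> projects I" "offerer I q = l" unfolding offered_def by auto
      show "card {s\<in>studs_of_proj N q. prefers I M N s} \<le> card {s\<in>studs_of_proj M q. prefers I M N s}"
      proof (cases "{s\<in>studs_of_proj N q. prefers I M N s} = {}")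
        case True then show ?thesis by (subst True) simp
      next
        case False
        then obtain t where tq: "(t, q) \<in> N" and pt: "prefers I M N t" unfolding studs_of_proj_def by auto
        have nu: "\<not> proj_under I M q" using \<open>\<not> (\<exists>q\<in>offered I l. \<exists>t. (t, q) \<in> N \<and> prefers I M N t \<and> proj_under I M q)\<close> qo tq pt by blast
        from nonblock[OF inst sM mN tq pt] nu
        have "proj_full I M q \<and> (\<forall>u\<in>studs_of_proj M q. lec_pref I (offerer I q) u t)" by blast
        then show ?thesis using proj_count[OF inst sM sN q(1) _ tq] by blast
      qed
    qed
    then have "(\<Sum>q\<in>offered I l. card {s\<in>studs_of_proj N q. prefers I M N s})
        \<le> (\<Sum>q\<in>offered I l. card {s\<in>studs_of_proj M q. prefers I M N s})" by (simp add: sum_mono)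
    then show ?thesis using lec_sum[OF inst mN] lec_sum[OF inst mM] by simp
  next
    case True
    then obtain q t where qo: "q \<in> offered I l" and tq: "(t, q) \<in> N" and pt: "prefers I M N t"
      and qu: "proj_under I M q" by blast
    have q: "q \<in> projects I" "offerer I q = l" using qo unfolding offered_def by auto
    have nf: "\<not> proj_full I M q" using qu unfolding proj_under_def proj_full_def by simp
    from nonblock[OF inst sM mN tq pt] nf q(2)
    have lfull: "lec_full I M l" and bt: "\<forall>u\<in>studs_of_lec I M l. lec_pref I l u t" by auto
    have tNl: "t \<in> studs_of_lec I N l" using tq q(2) unfolding studs_of_lec_def by blast
    have "\<forall>p\<in>offered I l. card {s\<in>studs_of_proj M p. prefers I N M s} \<le> card {s\<in>studs_of_proj N p. prefers I N M s}"
    proof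
      fix p assume po: "p \<in> offered I l"
      then have p: "p \<in> projects I" "offerer I p = l" unfolding offered_def by auto
      show "card {s\<in>studs_of_proj M p. prefers I N M s} \<le> card {s\<in>studs_of_proj N p. prefers I N M s}"
      proof (cases "{s\<in>studs_of_proj M p. prefers I N M s} = {}")
        case True then show ?thesis by (subst True) simp
      next
        case False
        then obtain s where sp: "(s, p) \<in> M" and ps: "prefers I N M s" unfolding studs_of_proj_def by auto
        have sMl: "s \<in> studs_of_lec I M l" using sp p(2) unfolding studs_of_lec_def by blast
        have st: "lec_pref I l s t" using bt sMl by blast
        have "\<not> (\<forall>u\<in>studs_of_lec I N l. lec_pref I l u s)"
          using tNl st sto_asym[OF sto] by blast
        then have "proj_full I N p \<and> (\<forall>u\<in>studs_of_proj N p. lec_pref I (offerer I p) u s)"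
          using nonblock[OF inst sN mM sp ps] p(2) by blast
        then show ?thesis using proj_count[OF inst sN sM p(1) _ sp] by blast
      qed
    qed
    then have "(\<Sum>p\<in>offered I l. card {s\<in>studs_of_proj M p. prefers I N M s})
        \<le> (\<Sum>p\<in>offered I l. card {s\<in>studs_of_proj N p. prefers I N M s})" by (simp add: sum_mono)
    then have ineq: "card {s\<in>studs_of_lec I M l. prefers I N M s} \<le> card {s\<in>studs_of_lec I N l. prefers I N M s}"
      using lec_sum[OF inst mN] lec_sum[OF inst mM] by simp
    have d1: "card (studs_of_lec I M l) = card (common I M N l) + card {s\<in>studs_of_lec I M l. prefers I N M s}
           + card {s\<in>studs_of_lec I M l. prefers I M N s}" using lec_decomp[OF inst mM mN] .
    have d2: "card (studs_of_lec I N l) = card (common I M N l) + card {s\<in>studs_of_lec I N l. prefers I M N s}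
           + card {s\<in>studs_of_lec I N l. prefers I N M s}" using lec_decomp[OF inst mN mM] common_sym by metis
    have "card (studs_of_lec I N l) \<le> card (studs_of_lec I M l)"
      using m_lcap[OF mN l] lfull unfolding lec_full_def by simp
    then show ?thesis using d1 d2 ineq by linarith
  qed
qed

lemma meet_D:
  assumes inst: "spa_instance I" and mM: "is_matching I M" and mN: "is_matching I N"
    and sp: "(s, p) \<in> meet I M N"
  shows "((s, p) \<in> M \<and> (s, p) \<in> N) \<or> ((s, p) \<in> M \<and> prefers I N M s) \<or> ((s, p) \<in> N \<and> prefers I M N s)"
proof -
  have 1: "(s, p) \<in> M \<union> N" and 2: "\<forall>q. (s, q) \<in> M \<union> N \<longrightarrow> q = p \<or> stu_pref I s p q"
    using sp unfolding meet_def by auto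
  show ?thesis
  proof (cases "(s, p) \<in> M")
    case sM: True
    show ?thesis
    proof (cases "(s, p) \<in> N")
      case True with sM show ?thesis by blast
    next
      case False
      have pM: "proj_of M s = p" using m_proj[OF mM sM] .
      have aM: "assigned M s" using sM unfolding assigned_def by blast
      have "prefers I N M s"
      proof (cases "assigned N s")
        case True
        have rN: "(s, proj_of N s) \<in> N" using m_assigned[OF mN True] .
        then have "proj_of N s \<noteq> p" using False by auto
        then have "stu_pref I s p (proj_of N s)" using 2 rN by blast
        then show ?thesis unfolding prefers_def using aM pM True by simp
      next
        case False then show ?thesis unfolding prefers_def using aM by simp
      qed
      then show ?thesis using sM by blast
    qed
  next
    case False
    then have sN: "(s, p) \<in> N" using 1 by blast
    have pN: "proj_of N s = p" using m_proj[OF mN sN] .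
    have aN: "assigned N s" using sN unfolding assigned_def by blast
    have "prefers I M N s"
    proof (cases "assigned M s")
      case True
      have rM: "(s, proj_of M s) \<in> M" using m_assigned[OF mM True] .
      then have "proj_of M s \<noteq> p" using False by auto
      then have "stu_pref I s p (proj_of M s)" using 2 rM by blast
      then show ?thesis unfolding prefers_def using aN pN True by simp
    next
      case False then show ?thesis unfolding prefers_def using aN by simp
    qed
    then show ?thesis using sN by blast
  qed
qed

theorem lemma7:
  fixes I :: "('s, 'p, 'l) spa" and M M' :: "('s \<times> 'p) set"
  assumes "spa_instance I" and "stable I M" and "stable I M'"
  shows "is_matching I (meet I M M')"
proof -
  note inst = assms(1) and sM = assms(2) and sM' = assms(3)
  have mM: "is_matching I M" using sM unfolding stable_def by blast
  have mM': "is_matching I M'" using sM' unfolding stable_def by blast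
  have f1: "\<forall>(s, p)\<in>meet I M M'. acceptable_pair I s p"
    unfolding meet_def using m_acc[OF mM] m_acc[OF mM'] by blast
  have f2: "\<forall>s p q. (s, p) \<in> meet I M M' \<longrightarrow> (s, q) \<in> meet I M M' \<longrightarrow> p = q"
  proof (intro allI impI)
    fix s p q assume a: "(s, p) \<in> meet I M M'" and b: "(s, q) \<in> meet I M M'"
    have "p = q \<or> stu_pref I s p q" using a b unfolding meet_def by blast
    moreover have "q = p \<or> stu_pref I s q p" using a b unfolding meet_def by blast
    moreover have "s \<in> students I" using f1 a by (auto simp: acceptable_pair_def)
    ultimately show "p = q" using sto_asym[OF inst_stu[OF inst]] by blast
  qed
  have f3: "\<forall>p\<in>projects I. card (studs_of_proj (meet I M M') p) \<le> pcap I p"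
  proof
    fix p assume p: "p \<in> projects I"
    let ?X = "studs_of_proj (meet I M M') p"
    have l: "offerer I p \<in> lecturers I" using inst_off[OF inst p] .
    have sto: "strict_total_on (lec_list I (offerer I p)) (lec_pref I (offerer I p))" using inst_lec[OF inst l] .
    have "?X \<subseteq> studs_of_proj M p \<or> ?X \<subseteq> studs_of_proj M' p"
    proof (rule ccontr)
      assume "\<not> (?X \<subseteq> studs_of_proj M p \<or> ?X \<subseteq> studs_of_proj M' p)"
      then obtain s s' where s: "s \<in> ?X" "s \<notin> studs_of_proj M' p" and s': "s' \<in> ?X" "s' \<notin> studs_of_proj M p"
        by blast
      have "(s, p) \<in> meet I M M'" using s unfolding studs_of_proj_def by simp
      then have sp: "(s, p) \<in> M" and ps: "prefers I M' M s"
        using meet_D[OF inst mM mM'] s(2) unfolding studs_of_proj_def by auto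
      have "(s', p) \<in> meet I M M'" using s' unfolding studs_of_proj_def by simp
      then have sp': "(s', p) \<in> M'" and ps': "prefers I M M' s'"
        using meet_D[OF inst mM mM'] s'(2) unfolding studs_of_proj_def by auto
      have "lec_pref I (offerer I p) s s'"
        using nonblock_proj[OF inst sM mM' sp' ps'] sp unfolding studs_of_proj_def by blast
      moreover have "lec_pref I (offerer I p) s' s"
        using nonblock_proj[OF inst sM' mM sp ps] sp' unfolding studs_of_proj_def by blast
      ultimately show False using sto_asym[OF sto] by blast
    qed
    then show "card ?X \<le> pcap I p"
    proof
      assume "?X \<subseteq> studs_of_proj M p"
      then have "card ?X \<le> card (studs_of_proj M p)" using card_mono fin_proj[OF inst mM] by blast
      then show ?thesis using m_pcap[OF mM p] by linarith
    next
      assume "?X \<subseteq> studs_of_proj M' p"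
      then have "card ?X \<le> card (studs_of_proj M' p)" using card_mono fin_proj[OF inst mM'] by blast
      then show ?thesis using m_pcap[OF mM' p] by linarith
    qed
  qed
  have f4: "\<forall>l\<in>lecturers I. card (studs_of_lec I (meet I M M') l) \<le> lcap I l"
  proof
    fix l assume l: "l \<in> lecturers I"
    let ?X = "studs_of_lec I (meet I M M') l"
    let ?C = "common I M M' l" and ?A = "{s\<in>studs_of_lec I M l. prefers I M' M s}"
    let ?V = "{s\<in>studs_of_lec I M' l. prefers I M M' s}" and ?W = "{s\<in>studs_of_lec I M l. prefers I M M' s}"
    have sub: "?X \<subseteq> ?C \<union> ?A \<union> ?V"
    proof
      fix s assume "s \<in> ?X"
      then obtain p where sp: "(s, p) \<in> meet I M M'" and pl: "offerer I p = l" unfolding studs_of_lec_def by blast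
      show "s \<in> ?C \<union> ?A \<union> ?V"
        using meet_D[OF inst mM mM' sp] pl unfolding common_def studs_of_lec_def by blast
    qed
    have finU: "finite (?C \<union> ?A \<union> ?V)"
    proof -
      have "?C \<union> ?A \<union> ?V \<subseteq> studs_of_lec I M l \<union> studs_of_lec I M' l"
        unfolding common_def studs_of_lec_def by blast
      then show ?thesis using fin_lec[OF inst mM] fin_lec[OF inst mM'] finite_subset by blast
    qed
    have "card ?X \<le> card (?C \<union> ?A \<union> ?V)" using card_mono[OF finU sub] .
    also have "\<dots> \<le> card (?C \<union> ?A) + card ?V" by (rule card_Un_le)
    also have "\<dots> \<le> card ?C + card ?A + card ?V" using card_Un_le[of ?C ?A] by linarith
    also have "\<dots> \<le> card ?C + card ?A + card ?W" using lec_count[OF inst sM sM' l] by linarith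
    also have "\<dots> = card (studs_of_lec I M l)" using lec_decomp[OF inst mM mM'] by simp
    also have "\<dots> \<le> lcap I l" using m_lcap[OF mM l] .
    finally show "card ?X \<le> lcap I l" .
  qed
  show ?thesis unfolding is_matching_def using f1 f2 f3 f4 by blast
qed

end
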